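(* Let $n\ge1$ and let $V=\bigoplus_{i=1}^{2n-1}V_i$, $W=\bigoplus_{i=1}^{2n-1}W_i$ be graded complex vector spaces with $\dim V_i=\dim V_{2n-i}$, $W_i=0$ for $i\ne n$, $\dim W_n=2$, and satisfying the nonemptiness condition below. Let $\sigma_n$ be an involution of $W_n$, $\langle\cdot,\cdot\rangle_n$ a nondegenerate skew-symmetric bilinear form on $W_n$, $(w,y)_n:=\langle w,\sigma_n(y)\rangle_n$, and $x\mapsto x^{\mathbf t}$ the transpose anti-automorphism of $\mathrm{End}(W_n)$ with respect to $(\cdot,\cdot)_n$. Then for every $(B_{i,j},\Gamma_i,\Delta_i)\in\Lambda^{\mathrm A_{2n-1}}(V,W)$ and every $1\le j\le n$, \[(\Delta_nB_{n,n-j+1,n}\Gamma_n)^{\mathbf t}=(-1)^j\,\sigma_n\Delta_nB_{n,n+j-1,n}\Gamma_n\sigma_n.\]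
   Context: $B_{i,j}$ ($|i-j|=1$) is a linear map $V_j\to V_i$, $\Gamma_i:W_i\to V_i$, $\Delta_i:V_i\to W_i$. $\Lambda^{\mathrm A_{2n-1}}(V,W)$ is the set of tuples satisfying (with $B_{0,1},B_{1,0},B_{2n,2n-1},B_{2n-1,2n}$ zero): $B_{i,i+1}B_{i+1,i}-B_{i,i-1}B_{i-1,i}=\Gamma_i\Delta_i$ for $1\le i\le n-1$; $-B_{n,n-1}B_{n-1,n}-B_{n,n+1}B_{n+1,n}=\Gamma_n\Delta_n$; $B_{i,i-1}B_{i-1,i}-B_{i,i+1}B_{i+1,i}=\Gamma_i\Delta_i$ for $n+1\le i\le2n-1$. Path notation: $B_{n,n-j+1,n}=B_{n,n-1}B_{n-1,n-2}\cdots B_{n-j+2,n-j+1}B_{n-j+1,n-j+2}\cdots B_{n-1,n}$ (the composite along the path $n\to n-1\to\dots\to n-j+1\to\dots\to n$), and similarly $B_{n,n+j-1,n}=B_{n,n+1}\cdots B_{n+j-2,n+j-1}B_{n+j-1,n+j-2}\cdots B_{n+1,n}$; for $j=1$ both are $\mathrm{id}_{V_n}$. Nonemptiness condition: with $v_i=\dim V_i$, put $s_1=1-v_1$ and $s_i=1-v_i+v_{i-1}$ for $2\le i\le n$; then $s_i\in\{-1,0,1\}$ for all $i$ and $|\{i:s_i\ne0\}|\le n$. *)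

theory Defs
  imports Complex_Main "Jordan_Normal_Form.Determinant"
begin

text \<open>Linear maps between finite-dimensional complex spaces are represented by
matrices w.r.t. chosen bases: V_i = C^(v i), W_i = C^(w i).\<close>

text \<open>B_{i,j} with the convention that arrows touching vertices outside 1..2n-1 are zero.\<close>
definition Bz :: "nat \<Rightarrow> (nat \<Rightarrow> nat) \<Rightarrow> (nat \<Rightarrow> nat \<Rightarrow> complex mat) \<Rightarrow> nat \<Rightarrow> nat \<Rightarrow> complex mat" where
  "Bz n v B i j = (if 1 \<le> i \<and> i \<le> 2*n-1 \<and> 1 \<le> j \<and> j \<le> 2*n-1 then B i j else 0\<^sub>m (v i) (v j))"

definition Lambda_A :: "nat \<Rightarrow> (nat \<Rightarrow> nat) \<Rightarrow> (nat \<Rightarrow> nat) \<Rightarrow> (nat \<Rightarrow> nat \<Rightarrow> complex mat)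
    \<Rightarrow> (nat \<Rightarrow> complex mat) \<Rightarrow> (nat \<Rightarrow> complex mat) \<Rightarrow> bool" where
  "Lambda_A n v w B \<Gamma> \<Delta> \<longleftrightarrow>
    (\<forall>i j. 1 \<le> i \<and> i \<le> 2*n-1 \<and> 1 \<le> j \<and> j \<le> 2*n-1 \<and> (j = i+1 \<or> i = j+1)
        \<longrightarrow> B i j \<in> carrier_mat (v i) (v j)) \<and>
    (\<forall>i. 1 \<le> i \<and> i \<le> 2*n-1 \<longrightarrow> \<Gamma> i \<in> carrier_mat (v i) (w i) \<and> \<Delta> i \<in> carrier_mat (w i) (v i)) \<and>
    (\<forall>i. 1 \<le> i \<and> i \<le> n-1 \<longrightarrow>
        Bz n v B i (i+1) * Bz n v B (i+1) i - Bz n v B i (i-1) * Bz n v B (i-1) i = \<Gamma> i * \<Delta> i) \<and>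
    (- (Bz n v B n (n-1) * Bz n v B (n-1) n) - Bz n v B n (n+1) * Bz n v B (n+1) n = \<Gamma> n * \<Delta> n) \<and>
    (\<forall>i. n+1 \<le> i \<and> i \<le> 2*n-1 \<longrightarrow>
        Bz n v B i (i-1) * Bz n v B (i-1) i - Bz n v B i (i+1) * Bz n v B (i+1) i = \<Gamma> i * \<Delta> i)"

text \<open>Path composites: path_down v B m k = B_{m,m-1} ... B_{m-k,m-k+1} ... B_{m-1,m},
  so that B_{n,n-j+1,n} = path_down v B n (j-1); similarly path_up.\<close>
fun path_down :: "(nat \<Rightarrow> nat) \<Rightarrow> (nat \<Rightarrow> nat \<Rightarrow> complex mat) \<Rightarrow> nat \<Rightarrow> nat \<Rightarrow> complex mat" where
  "path_down v B m 0 = 1\<^sub>m (v m)"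
| "path_down v B m (Suc k) = B m (m-1) * path_down v B (m-1) k * B (m-1) m"

fun path_up :: "(nat \<Rightarrow> nat) \<Rightarrow> (nat \<Rightarrow> nat \<Rightarrow> complex mat) \<Rightarrow> nat \<Rightarrow> nat \<Rightarrow> complex mat" where
  "path_up v B m 0 = 1\<^sub>m (v m)"
| "path_up v B m (Suc k) = B m (m+1) * path_up v B (m+1) k * B (m+1) m"

definition s_coord :: "(nat \<Rightarrow> nat) \<Rightarrow> nat \<Rightarrow> int" where
  "s_coord v i = (if i = 1 then 1 - int (v 1) else 1 - int (v i) + int (v (i-1)))"

definition nonempty_cond :: "nat \<Rightarrow> (nat \<Rightarrow> nat) \<Rightarrow> bool" where
  "nonempty_cond n v \<longleftrightarrow> (\<forall>i\<in>{1..n}. s_coord v i \<in> {-1, 0, 1}) \<and>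
     card {i\<in>{1..n}. s_coord v i \<noteq> 0} \<le> n"

text \<open>Bilinear form given by a matrix: (w, y) = w^T J y (no conjugation).\<close>
definition bilin :: "complex mat \<Rightarrow> complex vec \<Rightarrow> complex vec \<Rightarrow> complex" where
  "bilin J w y = w \<bullet> (J *\<^sub>v y)"

definition form_transpose :: "(complex vec \<Rightarrow> complex vec \<Rightarrow> complex) \<Rightarrow> nat \<Rightarrow> complex mat \<Rightarrow> complex mat" where
  "form_transpose f d x = (THE x'. x' \<in> carrier_mat d d \<and>
     (\<forall>w\<in>carrier_vec d. \<forall>y\<in>carrier_vec d. f (x *\<^sub>v w) y = f w (x' *\<^sub>v y)))"

end

theory Submission
  imports Defs
begin

lemma mult2_idx:
  fixes A B :: "'a::comm_ring_1 mat"
  assumes "A \<in> carrier_mat m 2" "B \<in> carrier_mat 2 k" "i < m" "j < k"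
  shows "(A * B) $$ (i,j) = A $$ (i,0) * B $$ (0,j) + A $$ (i,1) * B $$ (1,j)"
  using assms by (simp add: scalar_prod_def numeral_2_eq_2)

lemma mult22:
  fixes A B :: "'a::comm_ring_1 mat"
  assumes "A \<in> carrier_mat 2 2" "B \<in> carrier_mat 2 2"
  shows "(A * B) $$ (0,0) = A $$ (0,0) * B $$ (0,0) + A $$ (0,Suc 0) * B $$ (Suc 0,0)"
   "(A * B) $$ (0,Suc 0) = A $$ (0,0) * B $$ (0,Suc 0) + A $$ (0,Suc 0) * B $$ (Suc 0,Suc 0)"
   "(A * B) $$ (Suc 0,0) = A $$ (Suc 0,0) * B $$ (0,0) + A $$ (Suc 0,Suc 0) * B $$ (Suc 0,0)"
   "(A * B) $$ (Suc 0,Suc 0) = A $$ (Suc 0,0) * B $$ (0,Suc 0) + A $$ (Suc 0,Suc 0) * B $$ (Suc 0,Suc 0)"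
  using mult2_idx[OF assms] by auto

lemma mat2_eqI:
  fixes A B :: "'a mat"
  assumes "A \<in> carrier_mat 2 2" "B \<in> carrier_mat 2 2"
   "A $$ (0,0) = B $$ (0,0)" "A $$ (0,1) = B $$ (0,1)" "A $$ (1,0) = B $$ (1,0)" "A $$ (1,1) = B $$ (1,1)"
  shows "A = B"
proof (rule eq_matI)
  fix i j assume "i < dim_row B" "j < dim_col B"
  then have "i < 2" "j < 2" using assms by auto
  then have "i = 0 \<or> i = 1" "j = 0 \<or> j = 1" by auto
  then show "A $$ (i,j) = B $$ (i,j)" using assms by auto
qed (use assms in auto)

lemma c22[simp]: "A \<in> carrier_mat 2 2 \<Longrightarrow> B \<in> carrier_mat 2 2 \<Longrightarrow> A * B \<in> carrier_mat 2 2"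
  by auto
lemma assoc22: "A \<in> carrier_mat 2 2 \<Longrightarrow> B \<in> carrier_mat 2 2 \<Longrightarrow> C \<in> carrier_mat 2 2 \<Longrightarrow>
   A * B * C = A * (B * C)" by (rule assoc_mult_mat)
lemma mv22: "A \<in> carrier_mat 2 2 \<Longrightarrow> B \<in> carrier_mat 2 2 \<Longrightarrow> v \<in> carrier_vec 2 \<Longrightarrow>
   (A * B) *\<^sub>v v = A *\<^sub>v (B *\<^sub>v v)" by (rule assoc_mult_mat_vec)
lemma cv22[simp]: "A \<in> carrier_mat 2 2 \<Longrightarrow> v \<in> carrier_vec 2 \<Longrightarrow> A *\<^sub>v v \<in> carrier_vec 2"
  by auto

definition adj2 :: "complex mat \<Rightarrow> complex mat" where
  "adj2 X = mat 2 2 (\<lambda>(i,j). if i=0 \<and> j=0 then X$$(1,1) else if i=0 \<and> j=1 then -X$$(0,1)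
     else if i=1 \<and> j=0 then -X$$(1,0) else X$$(0,0))"

lemma adj2_carrier[simp]: "adj2 X \<in> carrier_mat 2 2" by (simp add: adj2_def)
lemma adj2_idx[simp]: "adj2 X $$ (0,0) = X$$(1,1)" "adj2 X $$ (0,1) = -X$$(0,1)"
  "adj2 X $$ (1,0) = -X$$(1,0)" "adj2 X $$ (1,1) = X$$(0,0)"
  "adj2 X $$ (0,Suc 0) = -X$$(0,Suc 0)"
  "adj2 X $$ (Suc 0,0) = -X$$(Suc 0,0)" "adj2 X $$ (Suc 0,Suc 0) = X$$(0,0)"
  by (simp_all add: adj2_def)

lemma skew_adj:
  fixes J X :: "complex mat"
  assumes J: "J \<in> carrier_mat 2 2" and X: "X \<in> carrier_mat 2 2" and sk: "transpose_mat J = - J"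
  shows "transpose_mat X * J = J * adj2 X"
proof -
  have e: "\<And>i j::nat. i<2 \<Longrightarrow> j<2 \<Longrightarrow> J$$(j,i) = - J$$(i,j)"
  proof -
    fix i j :: nat assume "i<2" "j<2"
    have "transpose_mat J $$ (i,j) = (-J) $$ (i,j)" using sk by simp
    then show "J$$(j,i) = - J$$(i,j)" using J \<open>i<2\<close> \<open>j<2\<close> by simp
  qed
  have z0: "J$$(0,0) = 0" using e[of 0 0] by simp
  have z1: "J$$(1,1) = 0" using e[of 1 1] by simp
  have z2: "J$$(1,0) = - J$$(0,1)" using e[of 0 1] by simp
  show ?thesis
    apply (rule mat2_eqI)
    using J X by (simp_all add: mult22 z0 z1[unfolded One_nat_def] z2[unfolded One_nat_def] algebra_simps del: index_mult_mat(1))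
qed

lemma det_zero2: "det (0\<^sub>m 2 2 :: complex mat) = 0"
proof -
  have "det ((0::complex) \<cdot>\<^sub>m (0\<^sub>m 2 2)) = 0" by (simp)
  moreover have "(0::complex) \<cdot>\<^sub>m (0\<^sub>m 2 2) = 0\<^sub>m 2 2" by auto
  ultimately show ?thesis by simp
qed

lemma bilin_left:
  fixes J \<sigma> X :: "complex mat"
  assumes J: "J \<in> carrier_mat 2 2" and S: "\<sigma> \<in> carrier_mat 2 2" and X: "X \<in> carrier_mat 2 2"
    and w: "w \<in> carrier_vec 2" and y: "y \<in> carrier_vec 2"
  shows "bilin J (X *\<^sub>v w) (\<sigma> *\<^sub>v y) = w \<bullet> ((transpose_mat X * J * \<sigma>) *\<^sub>v y)"
proof -
  have z: "J *\<^sub>v (\<sigma> *\<^sub>v y) \<in> carrier_vec 2" using J S y by simp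
  have "bilin J (X *\<^sub>v w) (\<sigma> *\<^sub>v y) = (X *\<^sub>v w) \<bullet> (J *\<^sub>v (\<sigma> *\<^sub>v y))" by (simp add: bilin_def)
  also have "\<dots> = (J *\<^sub>v (\<sigma> *\<^sub>v y)) \<bullet> (X *\<^sub>v w)"
    by (rule comm_scalar_prod[of _ 2], use X w z in auto)
  also have "\<dots> = (transpose_mat X *\<^sub>v (J *\<^sub>v (\<sigma> *\<^sub>v y))) \<bullet> w"
    by (rule transpose_vec_mult_scalar[symmetric, OF X w z])
  also have "\<dots> = w \<bullet> (transpose_mat X *\<^sub>v (J *\<^sub>v (\<sigma> *\<^sub>v y)))"
    by (rule comm_scalar_prod[of _ 2], use X w z in auto)
  also have "transpose_mat X *\<^sub>v (J *\<^sub>v (\<sigma> *\<^sub>v y)) = (transpose_mat X * J * \<sigma>) *\<^sub>v y"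
    using X J S y by (simp add: mv22 assoc22)
  finally show ?thesis .
qed

lemma bilin_right:
  fixes J \<sigma> X :: "complex mat"
  assumes J: "J \<in> carrier_mat 2 2" and S: "\<sigma> \<in> carrier_mat 2 2" and X: "X \<in> carrier_mat 2 2"
    and w: "w \<in> carrier_vec 2" and y: "y \<in> carrier_vec 2"
  shows "bilin J w (\<sigma> *\<^sub>v (X *\<^sub>v y)) = w \<bullet> ((J * \<sigma> * X) *\<^sub>v y)"
  using J S X y by (simp add: bilin_def mv22 assoc22)

lemma unit_entry:
  fixes M :: "complex mat"
  assumes "M \<in> carrier_mat 2 2" "i < 2" "j < 2"
  shows "unit_vec 2 i \<bullet> (M *\<^sub>v unit_vec 2 j) = M $$ (i,j)"
  using assms by simp

lemma ft:
  fixes J \<sigma> X :: "complex mat"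
  assumes J: "J \<in> carrier_mat 2 2" and S: "\<sigma> \<in> carrier_mat 2 2" and X: "X \<in> carrier_mat 2 2"
    and SS: "\<sigma> * \<sigma> = 1\<^sub>m 2" and sk: "transpose_mat J = - J" and dJ: "det J \<noteq> 0"
  shows "form_transpose (\<lambda>x y. bilin J x (\<sigma> *\<^sub>v y)) 2 X = \<sigma> * adj2 X * \<sigma>"
proof -
  let ?C = "\<sigma> * adj2 X * \<sigma>"
  have C: "?C \<in> carrier_mat 2 2" using S by auto
  have XT: "transpose_mat X \<in> carrier_mat 2 2" using X by auto
  have key: "J * \<sigma> * ?C = transpose_mat X * J * \<sigma>"
  proof -
    have "J * \<sigma> * ?C = J * (\<sigma> * \<sigma>) * adj2 X * \<sigma>"
      using J S by (simp add: assoc22)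
    also have "\<dots> = J * adj2 X * \<sigma>" using SS J by simp
    also have "\<dots> = transpose_mat X * J * \<sigma>" using skew_adj[OF J X sk] by simp
    finally show ?thesis .
  qed
  have e: "\<And>i j::nat. i<2 \<Longrightarrow> j<2 \<Longrightarrow> J$$(j,i) = - J$$(i,j)"
  proof -
    fix i j :: nat assume "i<2" "j<2"
    have "transpose_mat J $$ (i,j) = (-J) $$ (i,j)" using sk by simp
    then show "J$$(j,i) = - J$$(i,j)" using J \<open>i<2\<close> \<open>j<2\<close> by simp
  qed
  have z0: "J$$(0,0) = 0" using e[of 0 0] by simp
  have z1: "J$$(Suc 0,Suc 0) = 0" using e[of 1 1] by simp
  have z2: "J$$(Suc 0,0) = - J$$(0,Suc 0)" using e[of 0 1] by simp
  have al: "J$$(0,Suc 0) \<noteq> 0"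
  proof
    assume a: "J$$(0,Suc 0) = 0"
    have "J = 0\<^sub>m 2 2" by (rule mat2_eqI, use J a z0 z1 z2 in auto)
    then show False using dJ det_zero2 by simp
  qed
  define Ji where "Ji = (- 1 / (J$$(0,Suc 0) * J$$(0,Suc 0))) \<cdot>\<^sub>m J"
  have Ji: "Ji \<in> carrier_mat 2 2" using J by (simp add: Ji_def)
  have JJ: "J * J = (- (J$$(0,Suc 0) * J$$(0,Suc 0))) \<cdot>\<^sub>m 1\<^sub>m 2"
    by (rule mat2_eqI, use J in \<open>simp_all add: mult22 z0 z1 z2 power2_eq_square del: index_mult_mat(1)\<close>)
  have JiJ: "Ji * J = 1\<^sub>m 2"
  proof -
    have "Ji * J = (- 1 / (J$$(0,Suc 0) * J$$(0,Suc 0))) \<cdot>\<^sub>m (J * J)"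
      unfolding Ji_def using J by (simp add: mult_smult_assoc_mat)
    also have "\<dots> = 1\<^sub>m 2" using al by (auto simp: JJ field_simps intro!: eq_matI)
    finally show ?thesis .
  qed
  have uniq: "x' = ?C" if x': "x' \<in> carrier_mat 2 2" and P: "\<forall>w\<in>carrier_vec 2. \<forall>y\<in>carrier_vec 2.
       bilin J (X *\<^sub>v w) (\<sigma> *\<^sub>v y) = bilin J w (\<sigma> *\<^sub>v (x' *\<^sub>v y))" for x'
  proof -
    have M: "J * \<sigma> * x' = J * \<sigma> * ?C"
    proof (rule eq_matI)
      fix i j assume ij: "i < dim_row (J * \<sigma> * ?C)" "j < dim_col (J * \<sigma> * ?C)"
      then have i: "i < 2" and j: "j < 2" using J C by auto
      have "(J * \<sigma> * x') $$ (i,j) = unit_vec 2 i \<bullet> ((J * \<sigma> * x') *\<^sub>v unit_vec 2 j)"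
        using unit_entry[of "J * \<sigma> * x'" i j] J S x' i j by simp
      also have "\<dots> = bilin J (unit_vec 2 i) (\<sigma> *\<^sub>v (x' *\<^sub>v unit_vec 2 j))"
        using bilin_right[OF J S x', of "unit_vec 2 i" "unit_vec 2 j"] by simp
      also have "\<dots> = bilin J (X *\<^sub>v unit_vec 2 i) (\<sigma> *\<^sub>v unit_vec 2 j)"
        using P by simp
      also have "\<dots> = unit_vec 2 i \<bullet> ((transpose_mat X * J * \<sigma>) *\<^sub>v unit_vec 2 j)"
        using bilin_left[OF J S X, of "unit_vec 2 i" "unit_vec 2 j"] by simp
      also have "\<dots> = (J * \<sigma> * ?C) $$ (i,j)"
        using unit_entry[of "transpose_mat X * J * \<sigma>" i j] J S C i j key X by simp
      finally show "(J * \<sigma> * x') $$ (i,j) = (J * \<sigma> * ?C) $$ (i,j)" .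
    qed (use J S x' C in auto)
    have "x' = \<sigma> * Ji * (J * \<sigma> * x')"
    proof -
      have "\<sigma> * Ji * (J * \<sigma> * x') = \<sigma> * (Ji * J) * \<sigma> * x'"
        using J S Ji x' by (simp add: assoc22)
      also have "\<dots> = x'" using JiJ SS S x' by simp
      finally show ?thesis by simp
    qed
    also have "\<dots> = \<sigma> * Ji * (J * \<sigma> * ?C)" using M by simp
    also have "\<dots> = \<sigma> * (Ji * J) * \<sigma> * ?C"
        using J S Ji C by (simp add: assoc22)
    also have "\<dots> = ?C" using JiJ SS S C by simp
    finally show ?thesis .
  qed
  have Pc: "\<forall>w\<in>carrier_vec 2. \<forall>y\<in>carrier_vec 2.
       bilin J (X *\<^sub>v w) (\<sigma> *\<^sub>v y) = bilin J w (\<sigma> *\<^sub>v (?C *\<^sub>v y))"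
    
  proof (intro ballI)
    fix w y :: "complex vec" assume w: "w \<in> carrier_vec 2" and y: "y \<in> carrier_vec 2"
    have "bilin J (X *\<^sub>v w) (\<sigma> *\<^sub>v y) = w \<bullet> ((transpose_mat X * J * \<sigma>) *\<^sub>v y)"
      by (rule bilin_left[OF J S X w y])
    also have "\<dots> = w \<bullet> ((J * \<sigma> * ?C) *\<^sub>v y)" using key by simp
    also have "\<dots> = bilin J w (\<sigma> *\<^sub>v (?C *\<^sub>v y))" by (rule bilin_right[OF J S C w y, symmetric])
    finally show "bilin J (X *\<^sub>v w) (\<sigma> *\<^sub>v y) = bilin J w (\<sigma> *\<^sub>v (?C *\<^sub>v y))" .
  qed
  show ?thesis unfolding form_transpose_def
    
  proof (rule the_equality)
    show "?C \<in> carrier_mat 2 2 \<and> (\<forall>w\<in>carrier_vec 2. \<forall>y\<in>carrier_vec 2.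
       bilin J (X *\<^sub>v w) (\<sigma> *\<^sub>v y) = bilin J w (\<sigma> *\<^sub>v (?C *\<^sub>v y)))" using C Pc by blast
  next
    fix x' assume "x' \<in> carrier_mat 2 2 \<and> (\<forall>w\<in>carrier_vec 2. \<forall>y\<in>carrier_vec 2.
       bilin J (X *\<^sub>v w) (\<sigma> *\<^sub>v y) = bilin J w (\<sigma> *\<^sub>v (x' *\<^sub>v y)))"
    then show "x' = ?C" using uniq by blast
  qed
qed



definition PP :: "nat \<Rightarrow> (nat \<Rightarrow> complex) \<Rightarrow> complex poly" where
  "PP K h = (\<Sum>k<K. monom (h k) k)"

lemma coeff_PP: assumes "\<forall>k\<ge>K. h k = 0" shows "coeff (PP K h) n = h n"
proof -
  have "coeff (PP K h) n = (\<Sum>k<K. if k = n then h k else 0)"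
    unfolding PP_def coeff_sum coeff_monom by (simp add: eq_commute)
  also have "\<dots> = (if n < K then h n else 0)" by (simp add: sum.delta)
  also have "\<dots> = h n" using assms by auto
  finally show ?thesis .
qed

lemma alg1: fixes z g00 g01 f00 f10 :: "'a::comm_ring_1"
  assumes "g00 = f00 + z*(g00*f00 + g01*f10)"
  shows "(1 + z*g00)*(1 - z*f00) + z*g01*(- z*f10) = 1"
proof -
  have "(1 + z*g00)*(1 - z*f00) + z*g01*(- z*f10) = 1 + z*(g00 - (f00 + z*(g00*f00 + g01*f10)))"
    by (simp add: algebra_simps)
  then show ?thesis using assms by simp
qed
lemma alg1b: fixes z g00 g01 f01 f11 :: "'a::comm_ring_1"
  assumes "g01 = f01 + z*(g00*f01 + g01*f11)"
  shows "(1 + z*g00)*(- z*f01) + z*g01*(1 - z*f11) = 0"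
proof -
  have "(1 + z*g00)*(- z*f01) + z*g01*(1 - z*f11) = z*(g01 - (f01 + z*(g00*f01 + g01*f11)))"
    by (simp add: algebra_simps)
  then show ?thesis using assms by simp
qed
lemma alg2: fixes y00 y01 y10 y11 x00 x01 x10 x11 :: "'a::comm_ring_1"
  assumes "y00*x00 + y01*x10 = 1" "y00*x01+y01*x11 = 0" "y10*x00 + y11*x10 = 0" "y10*x01 + y11*x11 = 1"
  shows "(y00*y11 - y01*y10)*(x00*x11 - x01*x10) = 1"
proof -
  have "(y00*y11 - y01*y10)*(x00*x11 - x01*x10) = (y00*x00 + y01*x10)*(y10*x01 + y11*x11) - (y00*x01+y01*x11)*(y10*x00 + y11*x10)"
    by (simp add: algebra_simps)
  then show ?thesis using assms by simp
qed
lemma alg3: fixes y00 y01 y10 y11 x00 x01 x10 x11 :: "'a::comm_ring_1"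
  assumes h: "y00*x00 + y01*x10 = 1" "y00*x01+y01*x11 = 0" "y10*x00 + y11*x10 = 0" "y10*x01 + y11*x11 = 1"
   and d: "x00*x11 - x01*x10 = 1"
  shows "y00 = x11 \<and> y01 = - x01 \<and> y10 = - x10 \<and> y11 = x00"
proof -
  have 1: "y00 * (x00*x11 - x01*x10) = (y00*x00 + y01*x10)*x11 - (y00*x01+y01*x11)*x10" by (simp add: algebra_simps)
  have 2: "y01 * (x00*x11 - x01*x10) = (y00*x00 + y01*x10)*(-x01) + (y00*x01+y01*x11)*x00" by (simp add: algebra_simps)
  have 3: "y10 * (x00*x11 - x01*x10) = (y10*x00 + y11*x10)*x11 - (y10*x01+y11*x11)*x10" by (simp add: algebra_simps)
  have 4: "y11 * (x00*x11 - x01*x10) = (y10*x00 + y11*x10)*(-x01) + (y10*x01+y11*x11)*x00" by (simp add: algebra_simps)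
  show ?thesis using 1 2 3 4 h d by simp
qed

lemma core:
  fixes f g :: "nat \<Rightarrow> nat \<Rightarrow> nat \<Rightarrow> complex" and K :: nat
  assumes fz: "\<And>r s k. k \<ge> K \<Longrightarrow> f r s k = 0" and gz: "\<And>r s k. k \<ge> K \<Longrightarrow> g r s k = 0"
    and rec: "\<And>r s k. r<2 \<Longrightarrow> s<2 \<Longrightarrow> g r s k = f r s k +
        (\<Sum>p<k. g r 0 p * f 0 s (k-1-p) + g r 1 p * f 1 s (k-1-p))"
  shows "g 0 0 k = - f 1 1 k \<and> g 0 1 k = f 0 1 k \<and> g 1 0 k = f 1 0 k \<and> g 1 1 k = - f 0 0 k"
proof -
  define F where "F r s = PP K (f r s)" for r s
  define G where "G r s = PP K (g r s)" for r s
  have cF: "coeff (F r s) n = f r s n" for r s n unfolding F_def by (rule coeff_PP, use fz in auto)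
  have cG: "coeff (G r s) n = g r s n" for r s n unfolding G_def by (rule coeff_PP, use gz in auto)
  let ?z = "[:0,1:] :: complex poly"
  have rp: "G r s = F r s + ?z * (G r 0 * F 0 s + G r 1 * F 1 s)" if rs: "r<2" "s<2" for r s
  proof (rule poly_eqI)
    fix n show "coeff (G r s) n = coeff (F r s + ?z * (G r 0 * F 0 s + G r 1 * F 1 s)) n"
    proof (cases n)
      case 0 then show ?thesis using rec[OF rs, of 0] by (simp add: cF cG)
    next
      case (Suc m)
      have "coeff (F r s + ?z * (G r 0 * F 0 s + G r 1 * F 1 s)) n
          = f r s n + ((\<Sum>i\<le>m. g r 0 i * f 0 s (m-i)) + (\<Sum>i\<le>m. g r 1 i * f 1 s (m-i)))"
        using Suc by (simp add: coeff_mult cF cG)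
      also have "\<dots> = f r s n + (\<Sum>p<n. g r 0 p * f 0 s (n-1-p) + g r 1 p * f 1 s (n-1-p))"
        using Suc by (simp add: sum.distrib lessThan_Suc_atMost)
      also have "\<dots> = g r s n" using rec[OF rs, of n] by simp
      finally show ?thesis by (simp add: cG)
    qed
  qed
  have e00: "G 0 0 = F 0 0 + ?z * (G 0 0 * F 0 0 + G 0 1 * F 1 0)" using rp[of 0 0] by simp
  have e01: "G 0 1 = F 0 1 + ?z * (G 0 0 * F 0 1 + G 0 1 * F 1 1)" using rp[of 0 1] by simp
  have e10: "G 1 0 = F 1 0 + ?z * (G 1 0 * F 0 0 + G 1 1 * F 1 0)" using rp[of 1 0] by simp
  have e11: "G 1 1 = F 1 1 + ?z * (G 1 0 * F 0 1 + G 1 1 * F 1 1)" using rp[of 1 1] by simp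
  define X00 where "X00 = 1 - ?z * F 0 0"
  define X01 where "X01 = - ?z * F 0 1"
  define X10 where "X10 = - ?z * F 1 0"
  define X11 where "X11 = 1 - ?z * F 1 1"
  define Y00 where "Y00 = 1 + ?z * G 0 0"
  define Y01 where "Y01 = ?z * G 0 1"
  define Y10 where "Y10 = ?z * G 1 0"
  define Y11 where "Y11 = 1 + ?z * G 1 1"
  have i00: "Y00 * X00 + Y01 * X10 = 1" unfolding X00_def X10_def Y00_def Y01_def using alg1[OF e00] .
  have i01: "Y00 * X01 + Y01 * X11 = 0" unfolding X01_def X11_def Y00_def Y01_def using alg1b[OF e01] .
  have i10: "Y10 * X00 + Y11 * X10 = 0" unfolding X00_def X10_def Y10_def Y11_def
    using alg1b[of "G 1 0" "F 1 0" ?z "G 1 1" "F 0 0"] e10 by (simp add: algebra_simps)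
  have i11: "Y10 * X01 + Y11 * X11 = 1" unfolding X01_def X11_def Y10_def Y11_def
    using alg1[of "G 1 1" "F 1 1" ?z "G 1 0" "F 0 1"] e11 by (simp add: algebra_simps)
  define D where "D = X00 * X11 - X01 * X10"
  have ED: "(Y00 * Y11 - Y01 * Y10) * D = 1" unfolding D_def using alg2[OF i00 i01 i10 i11] .
  then have "D dvd 1" by (metis dvdI mult.commute)
  then obtain c where c: "D = [:c:]" using is_unit_poly_iff by blast
  have "poly D 0 = 1" unfolding D_def X00_def X01_def X10_def X11_def by simp
  then have D1: "D = 1" using c by (simp add: one_pCons)
  have aa: "Y00 = X11 \<and> Y01 = - X01 \<and> Y10 = - X10 \<and> Y11 = X00"
    using alg3[OF i00 i01 i10 i11] D1 unfolding D_def by simp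
  have a00: "Y00 = X11" and a01: "Y01 = - X01" and a10: "Y10 = - X10" and a11: "Y11 = X00"
    using aa by auto
  have z0: "?z \<noteq> 0" by simp
  have "G 0 0 + F 1 1 = 0" using a00 z0 unfolding X11_def Y00_def by (simp add: algebra_simps)
  then have q00: "G 0 0 = - F 1 1" by (simp add: eq_neg_iff_add_eq_0)
  have q01: "G 0 1 = F 0 1" using a01 z0 unfolding X01_def Y01_def by simp
  have q10: "G 1 0 = F 1 0" using a10 z0 unfolding X10_def Y10_def by simp
  have "G 1 1 + F 0 0 = 0" using a11 z0 unfolding X00_def Y11_def by (simp add: algebra_simps)
  then have q11: "G 1 1 = - F 0 0" by (simp add: eq_neg_iff_add_eq_0)
  show ?thesis using q00 q01 q10 q11
    by (metis cF cG coeff_minus)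
qed



lemma pow_left: assumes A: "A \<in> carrier_mat n n" shows "A ^\<^sub>m Suc k = A * A ^\<^sub>m k"
proof (induction k)
  case 0 then show ?case using A by simp
next
  case (Suc k)
  have "A ^\<^sub>m Suc (Suc k) = A ^\<^sub>m Suc k * A" by simp
  also have "\<dots> = (A * A ^\<^sub>m k) * A" using Suc by simp
  also have "\<dots> = A * (A ^\<^sub>m k * A)" using A by (simp add: assoc_mult_mat[of _ n n _ n _ n])
  finally show ?case by simp
qed

lemma pow_zero_ge: assumes A: "A \<in> carrier_mat n n" and z: "A ^\<^sub>m K = 0\<^sub>m n n" and k: "k \<ge> K"
  shows "A ^\<^sub>m k = 0\<^sub>m n n"
  using k
proof (induction k rule: dec_induct)
  case base then show ?case using z .
next
  case (step k) then show ?case using A by simp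
qed

lemma cNN[simp]: "A \<in> carrier_mat n n \<Longrightarrow> B \<in> carrier_mat n n \<Longrightarrow> A * B \<in> carrier_mat n n"
  by auto

lemma sandwich_add:
  fixes P Q D G :: "'a::comm_ring_1 mat"
  assumes D: "D \<in> carrier_mat m N" and G: "G \<in> carrier_mat N k" and P: "P \<in> carrier_mat N N" and Q: "Q \<in> carrier_mat N N"
  shows "D * (P + Q) * G = D * P * G + D * Q * G"
proof -
  have "D * (P + Q) = D * P + D * Q" by (rule mult_add_distrib_mat[OF D P Q])
  moreover have "(D * P + D * Q) * G = D * P * G + D * Q * G"
    by (rule add_mult_distrib_mat[of _ m N], use D P Q G in auto)
  ultimately show ?thesis by simp
qed

lemma step_mat:
  fixes a \<Gamma> \<Delta> bb :: "complex mat"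
  assumes a: "a \<in> carrier_mat N N" and G: "\<Gamma> \<in> carrier_mat N 2" and D: "\<Delta> \<in> carrier_mat 2 N"
    and bb: "bb = a + \<Gamma> * \<Delta>"
  shows "\<Delta> * (bb ^\<^sub>m Suc i * a ^\<^sub>m m) * \<Gamma> = \<Delta> * (bb ^\<^sub>m i * a ^\<^sub>m Suc m) * \<Gamma>
          + (\<Delta> * bb ^\<^sub>m i * \<Gamma>) * (\<Delta> * a ^\<^sub>m m * \<Gamma>)"
proof -
  have b: "bb \<in> carrier_mat N N" using a G D bb by auto
  have c: "\<Gamma> * \<Delta> \<in> carrier_mat N N" using G D by auto
  have bi: "bb ^\<^sub>m i \<in> carrier_mat N N" using b by simp
  have am: "a ^\<^sub>m m \<in> carrier_mat N N" using a by simp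
  have "bb ^\<^sub>m Suc i * a ^\<^sub>m m = bb ^\<^sub>m i * (bb * a ^\<^sub>m m)"
    using bi b am by (simp add: assoc_mult_mat[of _ N N _ N _ N])
  also have "bb * a ^\<^sub>m m = a ^\<^sub>m Suc m + \<Gamma> * \<Delta> * a ^\<^sub>m m"
    using bb a c am by (simp add: add_mult_distrib_mat[of _ N N _ _ N] pow_left[OF a] del: pow_mat.simps(2))
  finally have "bb ^\<^sub>m Suc i * a ^\<^sub>m m = bb ^\<^sub>m i * (a ^\<^sub>m Suc m + \<Gamma> * \<Delta> * a ^\<^sub>m m)" .
  also have "\<dots> = bb ^\<^sub>m i * a ^\<^sub>m Suc m + bb ^\<^sub>m i * (\<Gamma> * \<Delta> * a ^\<^sub>m m)"
    by (rule mult_add_distrib_mat[OF bi], use a c am in auto)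
  finally have E: "bb ^\<^sub>m Suc i * a ^\<^sub>m m = bb ^\<^sub>m i * a ^\<^sub>m Suc m + bb ^\<^sub>m i * (\<Gamma> * \<Delta> * a ^\<^sub>m m)" .
  have "\<Delta> * (bb ^\<^sub>m Suc i * a ^\<^sub>m m) * \<Gamma> =
     \<Delta> * (bb ^\<^sub>m i * a ^\<^sub>m Suc m) * \<Gamma> + \<Delta> * (bb ^\<^sub>m i * (\<Gamma> * \<Delta> * a ^\<^sub>m m)) * \<Gamma>"
    unfolding E by (rule sandwich_add[OF D G], use bi a c am in auto)
  also have "\<Delta> * (bb ^\<^sub>m i * (\<Gamma> * \<Delta> * a ^\<^sub>m m)) * \<Gamma> = (\<Delta> * bb ^\<^sub>m i * \<Gamma>) * (\<Delta> * a ^\<^sub>m m * \<Gamma>)"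
  proof -
    have "\<Delta> * (bb ^\<^sub>m i * (\<Gamma> * \<Delta> * a ^\<^sub>m m)) * \<Gamma> = \<Delta> * (bb ^\<^sub>m i * (\<Gamma> * (\<Delta> * a ^\<^sub>m m))) * \<Gamma>"
      using G D am by (simp add: assoc_mult_mat[of _ N 2 _ N _ N])
    also have "\<dots> = \<Delta> * ((bb ^\<^sub>m i * \<Gamma>) * (\<Delta> * a ^\<^sub>m m)) * \<Gamma>"
      using G D am bi by (simp add: assoc_mult_mat[of _ N N _ 2 _ N])
    also have "\<dots> = (\<Delta> * (bb ^\<^sub>m i * \<Gamma>)) * (\<Delta> * a ^\<^sub>m m) * \<Gamma>"
      using G D am bi by (simp add: assoc_mult_mat[of _ 2 N _ 2 _ N])
    also have "\<dots> = (\<Delta> * (bb ^\<^sub>m i * \<Gamma>)) * ((\<Delta> * a ^\<^sub>m m) * \<Gamma>)"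
      using G D am bi by (simp add: assoc_mult_mat[of _ 2 2 _ N _ 2])
    also have "\<dots> = (\<Delta> * bb ^\<^sub>m i * \<Gamma>) * (\<Delta> * a ^\<^sub>m m * \<Gamma>)"
      using G D am bi by (simp add: assoc_mult_mat[of _ 2 N _ N _ 2])
    finally show ?thesis .
  qed
  finally show ?thesis .
qed



lemma adj2_dim[simp]: "dim_row (adj2 X) = 2" "dim_col (adj2 X) = 2"
  by (simp_all add: adj2_def)

lemma seq_main:
  fixes a \<Gamma> \<Delta> bb :: "complex mat"
  assumes a: "a \<in> carrier_mat N N" and G: "\<Gamma> \<in> carrier_mat N 2" and D: "\<Delta> \<in> carrier_mat 2 N"
    and bb: "bb = a + \<Gamma> * \<Delta>" and na: "a ^\<^sub>m K = 0\<^sub>m N N" and nb: "bb ^\<^sub>m K = 0\<^sub>m N N"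
  shows "\<Delta> * bb ^\<^sub>m k * \<Gamma> = - adj2 (\<Delta> * a ^\<^sub>m k * \<Gamma>)"
proof -
  have b: "bb \<in> carrier_mat N N" using a G D bb by auto
  have cF: "\<Delta> * a ^\<^sub>m k * \<Gamma> \<in> carrier_mat 2 2" for k using a G D by auto
  have cG: "\<Delta> * bb ^\<^sub>m k * \<Gamma> \<in> carrier_mat 2 2" for k using b G D by auto
  define f where "f r s k = (if r < 2 \<and> s < 2 then (\<Delta> * a ^\<^sub>m k * \<Gamma>) $$ (r,s) else 0)" for r s k
  define g where "g r s k = (if r < 2 \<and> s < 2 then (\<Delta> * bb ^\<^sub>m k * \<Gamma>) $$ (r,s) else 0)" for r s k
  have fz: "f r s k = 0" if "k \<ge> K" for r s k
    using pow_zero_ge[OF a na that] D G unfolding f_def by auto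
  have gz: "g r s k = 0" if "k \<ge> K" for r s k
    using pow_zero_ge[OF b nb that] D G unfolding g_def by auto
  have T: "(\<Delta> * (bb ^\<^sub>m i * a ^\<^sub>m m) * \<Gamma>) $$ (r,s) = f r s (i+m) +
        (\<Sum>p<i. g r 0 p * f 0 s (i+m-1-p) + g r 1 p * f 1 s (i+m-1-p))" if rs: "r<2" "s<2" for r s i m
    using rs
  proof (induction i arbitrary: m)
    case 0
    have "bb ^\<^sub>m 0 * a ^\<^sub>m m = a ^\<^sub>m m" using a b by simp
    then show ?case using 0 by (simp add: f_def)
  next
    case (Suc i)
    have "(\<Delta> * (bb ^\<^sub>m Suc i * a ^\<^sub>m m) * \<Gamma>) $$ (r,s) = (\<Delta> * (bb ^\<^sub>m i * a ^\<^sub>m Suc m) * \<Gamma>) $$ (r,s)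
          + ((\<Delta> * bb ^\<^sub>m i * \<Gamma>) * (\<Delta> * a ^\<^sub>m m * \<Gamma>)) $$ (r,s)"
      unfolding step_mat[OF a G D bb] using Suc.prems a b G D by simp
    also have "((\<Delta> * bb ^\<^sub>m i * \<Gamma>) * (\<Delta> * a ^\<^sub>m m * \<Gamma>)) $$ (r,s) = g r 0 i * f 0 s m + g r 1 i * f 1 s m"
      using mult2_idx[OF cG cF Suc.prems] Suc.prems by (simp add: f_def g_def)
    also have "(\<Delta> * (bb ^\<^sub>m i * a ^\<^sub>m Suc m) * \<Gamma>) $$ (r,s) = f r s (i + Suc m) +
        (\<Sum>p<i. g r 0 p * f 0 s (i + Suc m -1-p) + g r 1 p * f 1 s (i + Suc m -1-p))"
      using Suc.IH[OF Suc.prems] .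
    finally show ?case by simp
  qed
  have rec: "g r s k = f r s k + (\<Sum>p<k. g r 0 p * f 0 s (k-1-p) + g r 1 p * f 1 s (k-1-p))"
    if rs: "r<2" "s<2" for r s k
  proof -
    have "bb ^\<^sub>m k * a ^\<^sub>m 0 = bb ^\<^sub>m k" using a b by simp
    then show ?thesis using T[OF rs, of k 0] rs by (simp add: g_def)
  qed
  have C: "g 0 0 k = - f 1 1 k \<and> g 0 1 k = f 0 1 k \<and> g 1 0 k = f 1 0 k \<and> g 1 1 k = - f 0 0 k"
    by (rule core[OF fz gz rec]) auto
  show ?thesis
    by (rule mat2_eqI, use cF cG C in \<open>auto simp: f_def g_def\<close>)
qed



lemma prod_zero_dim: fixes A B :: "complex mat"
  assumes "A \<in> carrier_mat m 0" "B \<in> carrier_mat 0 m" shows "A * B = 0\<^sub>m m m"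
  by (rule eq_matI, use assms in \<open>auto simp: scalar_prod_def\<close>)

lemma minus_eq0: fixes X Y :: "complex mat"
  assumes "X \<in> carrier_mat p q" "Y \<in> carrier_mat p q" "X - Y = 0\<^sub>m p q" shows "X = Y"
proof (rule eq_matI)
  fix i j assume "i < dim_row Y" "j < dim_col Y"
  then have ij: "i < p" "j < q" using assms by auto
  have "(X - Y) $$ (i,j) = 0" using assms ij by simp
  moreover have "(X - Y) $$ (i,j) = X $$ (i,j) - Y $$ (i,j)" by (rule index_minus_mat, use assms ij in auto)
  ultimately show "X $$ (i,j) = Y $$ (i,j)" by simp
qed (use assms in auto)

lemma swap_pow: fixes X Y :: "complex mat"
  assumes X: "X \<in> carrier_mat p q" and Y: "Y \<in> carrier_mat q p"
  shows "X * (Y * X) ^\<^sub>m k * Y = (X * Y) ^\<^sub>m Suc k"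
proof (induction k)
  case 0 then show ?case using X Y by simp
next
  case (Suc k)
  have YX: "Y * X \<in> carrier_mat q q" using X Y by auto
  have XY: "X * Y \<in> carrier_mat p p" using X Y by auto
  have P: "(Y * X) ^\<^sub>m k \<in> carrier_mat q q" using YX by simp
  have "X * (Y * X) ^\<^sub>m Suc k * Y = X * ((Y * X) ^\<^sub>m k * (Y * X)) * Y" by simp
  also have "\<dots> = (X * (Y * X) ^\<^sub>m k * Y) * (X * Y)"
  proof -
    have "X * ((Y * X) ^\<^sub>m k * (Y * X)) = X * (Y * X) ^\<^sub>m k * (Y * X)"
      using X P YX by (simp add: assoc_mult_mat[of X p q _ q _ q])
    also have "\<dots> = X * (Y * X) ^\<^sub>m k * Y * X"
      using X P Y by (simp add: assoc_mult_mat[of "X * (Y * X) ^\<^sub>m k" p q Y p X q])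
    finally have "X * ((Y * X) ^\<^sub>m k * (Y * X)) * Y = X * (Y * X) ^\<^sub>m k * Y * X * Y" by simp
    also have "\<dots> = (X * (Y * X) ^\<^sub>m k * Y) * (X * Y)"
    proof -
      have W: "X * (Y * X) ^\<^sub>m k * Y \<in> carrier_mat p p" using X Y P by auto
      show ?thesis by (rule assoc_mult_mat[OF W X Y])
    qed
    finally show ?thesis .
  qed
  also have "\<dots> = (X * Y) ^\<^sub>m Suc (Suc k)" using Suc by simp
  finally show ?case .
qed

lemma pow_smult: fixes A :: "complex mat" assumes A: "A \<in> carrier_mat m m"
  shows "(c \<cdot>\<^sub>m A) ^\<^sub>m k = c ^ k \<cdot>\<^sub>m A ^\<^sub>m k"
proof (induction k)
  case 0 then show ?case using A by (auto intro!: eq_matI)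
next
  case (Suc k)
  have "(c \<cdot>\<^sub>m A) ^\<^sub>m Suc k = (c ^ k \<cdot>\<^sub>m A ^\<^sub>m k) * (c \<cdot>\<^sub>m A)" using Suc by simp
  also have "\<dots> = c ^ k \<cdot>\<^sub>m (A ^\<^sub>m k * (c \<cdot>\<^sub>m A))"
    by (rule mult_smult_assoc_mat, use A in auto)
  also have "\<dots> = c ^ k \<cdot>\<^sub>m (c \<cdot>\<^sub>m (A ^\<^sub>m k * A))"
    using mult_smult_distrib[of "A ^\<^sub>m k" m m A m c] A by simp
  also have "\<dots> = c ^ Suc k \<cdot>\<^sub>m A ^\<^sub>m Suc k" by (auto intro!: eq_matI)
  finally show ?case .
qed



context
  fixes n :: nat and v w :: "nat \<Rightarrow> nat" and B :: "nat \<Rightarrow> nat \<Rightarrow> complex mat"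
    and \<Gamma> \<Delta> :: "nat \<Rightarrow> complex mat"
  assumes n1: "n \<ge> 1" and wdef: "\<forall>i. w i = (if i = n then 2 else 0)"
    and L: "Lambda_A n v w B \<Gamma> \<Delta>"
begin

lemma Bzc: "j = i+1 \<or> i = j+1 \<Longrightarrow> Bz n v B i j \<in> carrier_mat (v i) (v j)"
  using L unfolding Lambda_A_def Bz_def by auto

lemma Bz_eq: "1 \<le> i \<Longrightarrow> i \<le> 2*n-1 \<Longrightarrow> 1 \<le> j \<Longrightarrow> j \<le> 2*n-1 \<Longrightarrow> Bz n v B i j = B i j"
  unfolding Bz_def by auto

lemma GD0: assumes "i \<noteq> n" "1 \<le> i" "i \<le> 2*n-1" shows "\<Gamma> i * \<Delta> i = 0\<^sub>m (v i) (v i)"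
proof -
  have "\<Gamma> i \<in> carrier_mat (v i) (w i)" "\<Delta> i \<in> carrier_mat (w i) (v i)"
    using L assms unfolding Lambda_A_def by auto
  moreover have "w i = 0" using wdef assms by simp
  ultimately show ?thesis using prod_zero_dim by simp
qed

lemma relL: assumes "1 \<le> i" "i \<le> n-1"
  shows "Bz n v B i (i+1) * Bz n v B (i+1) i = Bz n v B i (i-1) * Bz n v B (i-1) i"
proof (rule minus_eq0)
  show "Bz n v B i (i+1) * Bz n v B (i+1) i \<in> carrier_mat (v i) (v i)"
    using Bzc[where i="i+1" and j=i] Bzc[where i=i and j="i+1"] by auto
  have "i = (i-1)+1" using assms by simp
  then show "Bz n v B i (i-1) * Bz n v B (i-1) i \<in> carrier_mat (v i) (v i)"
    using Bzc[where i="i-1" and j=i] Bzc[where i=i and j="i-1"] by (metis mult_carrier_mat)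
  have "Bz n v B i (i+1) * Bz n v B (i+1) i - Bz n v B i (i-1) * Bz n v B (i-1) i = \<Gamma> i * \<Delta> i"
    using L assms unfolding Lambda_A_def by auto
  also have "\<dots> = 0\<^sub>m (v i) (v i)" by (rule GD0, use assms in auto)
  finally show "Bz n v B i (i+1) * Bz n v B (i+1) i - Bz n v B i (i-1) * Bz n v B (i-1) i = 0\<^sub>m (v i) (v i)" .
qed

lemma relR: assumes "n+1 \<le> i" "i \<le> 2*n-1"
  shows "Bz n v B i (i-1) * Bz n v B (i-1) i = Bz n v B i (i+1) * Bz n v B (i+1) i"
proof (rule minus_eq0)
  show "Bz n v B i (i+1) * Bz n v B (i+1) i \<in> carrier_mat (v i) (v i)"
    using Bzc[where i="i+1" and j=i] Bzc[where i=i and j="i+1"] by auto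
  have "i = (i-1)+1" using assms by simp
  then show "Bz n v B i (i-1) * Bz n v B (i-1) i \<in> carrier_mat (v i) (v i)"
    using Bzc[where i="i-1" and j=i] Bzc[where i=i and j="i-1"] by (metis mult_carrier_mat)
  have "Bz n v B i (i-1) * Bz n v B (i-1) i - Bz n v B i (i+1) * Bz n v B (i+1) i = \<Gamma> i * \<Delta> i"
    using L assms unfolding Lambda_A_def by auto
  also have "\<dots> = 0\<^sub>m (v i) (v i)" by (rule GD0, use assms in auto)
  finally show "Bz n v B i (i-1) * Bz n v B (i-1) i - Bz n v B i (i+1) * Bz n v B (i+1) i = 0\<^sub>m (v i) (v i)" .
qed

definition "AA m = Bz n v B m (m-1) * Bz n v B (m-1) m"
definition "CC m = Bz n v B m (m+1) * Bz n v B (m+1) m"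

lemma AA_c: "1 \<le> m \<Longrightarrow> AA m \<in> carrier_mat (v m) (v m)"
  unfolding AA_def using Bzc[where i=m and j="m-1"] Bzc[where i="m-1" and j=m] by (metis le_add_diff_inverse2 mult_carrier_mat)

lemma CC_c: "CC m \<in> carrier_mat (v m) (v m)"
  unfolding CC_def using Bzc[where i=m and j="m+1"] Bzc[where i="m+1" and j=m] by (metis mult_carrier_mat)

lemma down: "1 \<le> m \<Longrightarrow> m \<le> n \<Longrightarrow> k \<le> m-1 \<Longrightarrow> path_down v B m k = AA m ^\<^sub>m k"
proof (induction k arbitrary: m)
  case 0 then show ?case using AA_c[of m] by simp
next
  case (Suc k)
  have m2: "m \<ge> 2" using Suc.prems by simp
  have IH: "path_down v B (m-1) k = AA (m-1) ^\<^sub>m k" using Suc.IH[of "m-1"] Suc.prems by simp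
  have e1: "AA (m-1) = CC (m-1)" unfolding AA_def CC_def using relL[of "m-1"] m2 Suc.prems by simp
  have e2: "CC (m-1) = Bz n v B (m-1) m * Bz n v B m (m-1)" unfolding CC_def using m2 by simp
  have X: "Bz n v B m (m-1) \<in> carrier_mat (v m) (v (m-1))" using Bzc[where i=m and j="m-1"] m2 by simp
  have Y: "Bz n v B (m-1) m \<in> carrier_mat (v (m-1)) (v m)" using Bzc[where i="m-1" and j=m] m2 by simp
  have b1: "B m (m-1) = Bz n v B m (m-1)" using Bz_eq[of m "m-1"] m2 Suc.prems by simp
  have b2: "B (m-1) m = Bz n v B (m-1) m" using Bz_eq[of "m-1" m] m2 Suc.prems by simp
  have "path_down v B m (Suc k) = B m (m-1) * path_down v B (m-1) k * B (m-1) m" by simp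
  also have "\<dots> = Bz n v B m (m-1) * (Bz n v B (m-1) m * Bz n v B m (m-1)) ^\<^sub>m k * Bz n v B (m-1) m"
    using IH e1 e2 b1 b2 by simp
  also have "\<dots> = AA m ^\<^sub>m Suc k" unfolding AA_def by (rule swap_pow[OF X Y])
  finally show ?case .
qed

lemma nilA: "1 \<le> m \<Longrightarrow> m \<le> n \<Longrightarrow> AA m ^\<^sub>m m = 0\<^sub>m (v m) (v m)"
proof (induction m)
  case 0 then show ?case by simp
next
  case (Suc m)
  show ?case
  proof (cases "m = 0")
    case True
    have "Bz n v B 1 0 = 0\<^sub>m (v 1) (v 0)" unfolding Bz_def by simp
    then have "AA 1 = 0\<^sub>m (v 1) (v 1)" unfolding AA_def using Bzc[where i=0 and j=1] by simp
    then show ?thesis using True by simp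
  next
    case False
    have X: "Bz n v B (Suc m) m \<in> carrier_mat (v (Suc m)) (v m)" using Bzc[where i="Suc m" and j=m] by simp
    have Y: "Bz n v B m (Suc m) \<in> carrier_mat (v m) (v (Suc m))" using Bzc[where i=m and j="Suc m"] by simp
    have e: "Bz n v B m (Suc m) * Bz n v B (Suc m) m = AA m"
      unfolding AA_def using relL[of m] False Suc.prems by simp
    have z: "AA m ^\<^sub>m m = 0\<^sub>m (v m) (v m)" using Suc.IH False Suc.prems by simp
    have "AA (Suc m) ^\<^sub>m Suc m = Bz n v B (Suc m) m * (Bz n v B m (Suc m) * Bz n v B (Suc m) m) ^\<^sub>m m * Bz n v B m (Suc m)"
      unfolding AA_def using swap_pow[OF X Y, of m] by simp
    also have "\<dots> = 0\<^sub>m (v (Suc m)) (v (Suc m))" unfolding e z using X Y by simp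
    finally show ?thesis .
  qed
qed

lemma up: "n \<le> m \<Longrightarrow> m \<le> 2*n-1 \<Longrightarrow> k \<le> 2*n-1-m \<Longrightarrow> path_up v B m k = CC m ^\<^sub>m k"
proof (induction k arbitrary: m)
  case 0 then show ?case using CC_c[of m] by simp
next
  case (Suc k)
  have m2: "m+1 \<le> 2*n-1" using Suc.prems by simp
  have IH: "path_up v B (m+1) k = CC (m+1) ^\<^sub>m k" using Suc.IH[of "m+1"] Suc.prems by simp
  have e1: "CC (m+1) = AA (m+1)" unfolding AA_def CC_def using relR[of "m+1"] m2 Suc.prems by simp
  have e2: "AA (m+1) = Bz n v B (m+1) m * Bz n v B m (m+1)" unfolding AA_def by simp
  have X: "Bz n v B m (m+1) \<in> carrier_mat (v m) (v (m+1))" using Bzc[where i=m and j="m+1"] by simp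
  have Y: "Bz n v B (m+1) m \<in> carrier_mat (v (m+1)) (v m)" using Bzc[where i="m+1" and j=m] by simp
  have b1: "B m (m+1) = Bz n v B m (m+1)" using Bz_eq[of m "m+1"] m2 Suc.prems n1 by simp
  have b2: "B (m+1) m = Bz n v B (m+1) m" using Bz_eq[of "m+1" m] m2 Suc.prems n1 by simp
  have "path_up v B m (Suc k) = B m (m+1) * path_up v B (m+1) k * B (m+1) m" by simp
  also have "\<dots> = Bz n v B m (m+1) * (Bz n v B (m+1) m * Bz n v B m (m+1)) ^\<^sub>m k * Bz n v B (m+1) m"
    using IH e1 e2 b1 b2 by simp
  also have "\<dots> = CC m ^\<^sub>m Suc k" unfolding CC_def by (rule swap_pow[OF X Y])
  finally show ?case .
qed

lemma nilC_aux: "\<forall>m. n \<le> m \<longrightarrow> m \<le> 2*n-1 \<longrightarrow> 2*n-1-m = d \<longrightarrow> CC m ^\<^sub>m (2*n-m) = 0\<^sub>m (v m) (v m)"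
proof (induction d)
  case 0
  show ?case
  proof (intro allI impI)
    fix m assume h: "n \<le> m" "m \<le> 2*n-1" "2*n-1-m = 0"
    then have m: "m = 2*n-1" by simp
    have nr: "\<not> (m+1 \<le> 2*n-1)" using m n1 by simp
    have "Bz n v B m (m+1) = 0\<^sub>m (v m) (v (m+1))" unfolding Bz_def using nr by auto
    then have "CC m = 0\<^sub>m (v m) (v m)" unfolding CC_def using Bzc[where i="m+1" and j=m] by simp
    moreover have "2*n-m = 1" using m n1 by simp
    ultimately show "CC m ^\<^sub>m (2*n-m) = 0\<^sub>m (v m) (v m)" by simp
  qed
next
  case (Suc d)
  show ?case
  proof (intro allI impI)
    fix m assume h: "n \<le> m" "m \<le> 2*n-1" "2*n-1-m = Suc d"
    have m2: "m+1 \<le> 2*n-1" using h by simp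
    have dd: "2*n-1-(m+1) = d" using h by simp
    have nm: "n \<le> m+1" using h by simp
    have z: "CC (m+1) ^\<^sub>m (2*n-(m+1)) = 0\<^sub>m (v (m+1)) (v (m+1))" using Suc.IH[rule_format, OF nm m2 dd] .
    have X: "Bz n v B m (m+1) \<in> carrier_mat (v m) (v (m+1))" using Bzc[where i=m and j="m+1"] by simp
    have Y: "Bz n v B (m+1) m \<in> carrier_mat (v (m+1)) (v m)" using Bzc[where i="m+1" and j=m] by simp
    have e: "Bz n v B (m+1) m * Bz n v B m (m+1) = CC (m+1)"
      using relR[of "m+1"] h m2 unfolding CC_def by simp
    have ex: "2*n-m = Suc (2*n-(m+1))" using h by simp
    have "CC m ^\<^sub>m (2*n-m) = Bz n v B m (m+1) * (Bz n v B (m+1) m * Bz n v B m (m+1)) ^\<^sub>m (2*n-(m+1)) * Bz n v B (m+1) m"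
      unfolding CC_def ex using swap_pow[OF X Y] by simp
    also have "\<dots> = 0\<^sub>m (v m) (v m)" unfolding e z using X Y by simp
    finally show "CC m ^\<^sub>m (2*n-m) = 0\<^sub>m (v m) (v m)" .
  qed
qed

lemma nilC: "CC n ^\<^sub>m n = 0\<^sub>m (v n) (v n)"
proof -
  have "n \<le> 2*n-1" using n1 by simp
  then have "CC n ^\<^sub>m (2*n-n) = 0\<^sub>m (v n) (v n)" using nilC_aux[of "2*n-1-n"] by blast
  moreover have "2*n-n = n" by simp
  ultimately show ?thesis by simp
qed

end


lemma lin1: fixes x y z :: "'a::ab_group_add" assumes "-x - y = z" shows "x + z = -y"
  using assms[symmetric] by simp

theorem lemma4p11:
  fixes n :: nat and v w :: "nat \<Rightarrow> nat"
    and B :: "nat \<Rightarrow> nat \<Rightarrow> complex mat" and \<Gamma> \<Delta> :: "nat \<Rightarrow> complex mat"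
    and \<sigma> J :: "complex mat" and j :: nat
  assumes "n \<ge> 1"
    and "\<forall>i. 1 \<le> i \<and> i \<le> 2*n-1 \<longrightarrow> v i = v (2*n - i)"
    and "\<forall>i. w i = (if i = n then 2 else 0)"
    and "nonempty_cond n v"
    and "\<sigma> \<in> carrier_mat 2 2" and "\<sigma> * \<sigma> = 1\<^sub>m 2"
    and "J \<in> carrier_mat 2 2" and "transpose_mat J = - J" and "det J \<noteq> 0"
    and "Lambda_A n v w B \<Gamma> \<Delta>"
    and "1 \<le> j" and "j \<le> n"
  shows "form_transpose (\<lambda>x y. bilin J x (\<sigma> *\<^sub>v y)) 2 (\<Delta> n * path_down v B n (j-1) * \<Gamma> n)
         = ((-1) ^ j :: complex) \<cdot>\<^sub>m (\<sigma> * \<Delta> n * path_up v B n (j-1) * \<Gamma> n * \<sigma>)"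
proof -
  note n1 = assms(1) and wdef = assms(3) and S = assms(5) and SS = assms(6) and J = assms(7)
    and sk = assms(8) and dJ = assms(9) and L = assms(10)
  define k where "k = j - 1"
  have jk: "j = Suc k" using assms(11) unfolding k_def by simp
  have kn: "k \<le> n - 1" using assms(12) assms(11) unfolding k_def by simp
  define a where "a = AA n v B n"
  define b where "b = CC n v B n"
  have Gc: "\<Gamma> n \<in> carrier_mat (v n) 2" and Dc: "\<Delta> n \<in> carrier_mat 2 (v n)"
    using L n1 wdef unfolding Lambda_A_def by auto
  have ac: "a \<in> carrier_mat (v n) (v n)" unfolding a_def by (rule AA_c[OF n1 wdef L n1])
  have bc: "b \<in> carrier_mat (v n) (v n)" unfolding b_def by (rule CC_c[OF n1 wdef L])
  have mid: "- a - b = \<Gamma> n * \<Delta> n"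
    using L unfolding Lambda_A_def a_def b_def AA_def[OF n1 wdef L] CC_def[OF n1 wdef L] by auto
  define bb where "bb = a + \<Gamma> n * \<Delta> n"
  have bbe: "bb = (-1) \<cdot>\<^sub>m b"
  proof (rule eq_matI)
    fix i j assume ij: "i < dim_row ((-1) \<cdot>\<^sub>m b)" "j < dim_col ((-1) \<cdot>\<^sub>m b)"
    then have i: "i < v n" and j: "j < v n" using bc by auto
    have "(- a - b) $$ (i,j) = (\<Gamma> n * \<Delta> n) $$ (i,j)" using mid by simp
    then have "- a $$ (i,j) - b $$ (i,j) = (\<Gamma> n * \<Delta> n) $$ (i,j)" using ac bc i j by simp
    then show "bb $$ (i,j) = ((-1) \<cdot>\<^sub>m b) $$ (i,j)"
      unfolding bb_def using ac bc Gc Dc i j by (simp add: lin1)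
  qed (use ac bc Gc Dc bb_def in auto)
  have na: "a ^\<^sub>m n = 0\<^sub>m (v n) (v n)" unfolding a_def by (rule nilA[OF n1 wdef L n1 order_refl])
  have nb0: "b ^\<^sub>m n = 0\<^sub>m (v n) (v n)" unfolding b_def by (rule nilC[OF n1 wdef L])
  have nb: "bb ^\<^sub>m n = 0\<^sub>m (v n) (v n)" unfolding bbe pow_smult[OF bc] nb0 by simp
  have sm: "\<Delta> n * bb ^\<^sub>m k * \<Gamma> n = - adj2 (\<Delta> n * a ^\<^sub>m k * \<Gamma> n)"
    by (rule seq_main[OF ac Gc Dc bb_def na nb])
  have pd: "path_down v B n k = a ^\<^sub>m k" unfolding a_def by (rule down[OF n1 wdef L n1 order_refl kn])
  have pu: "path_up v B n k = b ^\<^sub>m k" unfolding b_def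
    by (rule up[OF n1 wdef L order_refl], use n1 kn in auto)
  define M where "M = \<Delta> n * b ^\<^sub>m k * \<Gamma> n"
  have Mc: "M \<in> carrier_mat 2 2" unfolding M_def using Dc Gc bc by auto
  have Fc: "\<Delta> n * a ^\<^sub>m k * \<Gamma> n \<in> carrier_mat 2 2" using Dc Gc ac by auto
  have bbk: "\<Delta> n * bb ^\<^sub>m k * \<Gamma> n = (-1) ^ k \<cdot>\<^sub>m M"
  proof -
    have "\<Delta> n * bb ^\<^sub>m k = (-1) ^ k \<cdot>\<^sub>m (\<Delta> n * b ^\<^sub>m k)"
      unfolding bbe pow_smult[OF bc] using mult_smult_distrib[of "\<Delta> n" 2 "v n" "b ^\<^sub>m k" "v n" "(-1)^k"] Dc bc by simp
    then show ?thesis unfolding M_def using Dc Gc bc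
      by (simp add: mult_smult_assoc_mat[of _ 2 "v n" _ 2])
  qed
  have adjF: "adj2 (\<Delta> n * a ^\<^sub>m k * \<Gamma> n) = (-1) ^ j \<cdot>\<^sub>m M"
  proof (rule eq_matI)
    fix r s assume rs: "r < dim_row ((-1) ^ j \<cdot>\<^sub>m M)" "s < dim_col ((-1) ^ j \<cdot>\<^sub>m M)"
    then have r: "r < 2" and s: "s < 2" using Mc by auto
    have "(- adj2 (\<Delta> n * a ^\<^sub>m k * \<Gamma> n)) $$ (r,s) = ((-1) ^ k \<cdot>\<^sub>m M) $$ (r,s)"
      using sm bbk by simp
    then have "- adj2 (\<Delta> n * a ^\<^sub>m k * \<Gamma> n) $$ (r,s) = (-1) ^ k * M $$ (r,s)"
      using r s Mc by simp
    then show "adj2 (\<Delta> n * a ^\<^sub>m k * \<Gamma> n) $$ (r,s) = ((-1) ^ j \<cdot>\<^sub>m M) $$ (r,s)"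
      using r s Mc jk by simp (metis minus_minus)
  qed (use Mc in auto)
  have "form_transpose (\<lambda>x y. bilin J x (\<sigma> *\<^sub>v y)) 2 (\<Delta> n * path_down v B n (j-1) * \<Gamma> n)
      = \<sigma> * adj2 (\<Delta> n * a ^\<^sub>m k * \<Gamma> n) * \<sigma>"
    unfolding k_def[symmetric] pd by (rule ft[OF J S Fc SS sk dJ])
  also have "\<dots> = \<sigma> * ((-1) ^ j \<cdot>\<^sub>m M) * \<sigma>" unfolding adjF ..
  also have "\<dots> = (-1) ^ j \<cdot>\<^sub>m (\<sigma> * M * \<sigma>)"
    using S Mc by (simp add: mult_smult_distrib[of _ 2 2] mult_smult_assoc_mat[of _ 2 2])
  also have "\<sigma> * M * \<sigma> = \<sigma> * \<Delta> n * path_up v B n (j-1) * \<Gamma> n * \<sigma>"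
  proof -
    have P: "b ^\<^sub>m k \<in> carrier_mat (v n) (v n)" using bc by simp
    have "\<sigma> * M = \<sigma> * (\<Delta> n * b ^\<^sub>m k) * \<Gamma> n" unfolding M_def
      using S Dc Gc P by (simp add: assoc_mult_mat[of \<sigma> 2 2 _ "v n" _ 2])
    also have "\<dots> = \<sigma> * \<Delta> n * b ^\<^sub>m k * \<Gamma> n"
      using S Dc P by (simp add: assoc_mult_mat[of \<sigma> 2 2 _ "v n" _ "v n"])
    finally show ?thesis unfolding k_def[symmetric] pu by simp
  qed
  finally show ?thesis .
qed


end
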